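(* Let $\Gamma=(N,A,u)$ be a finite normal form game. If $\operatorname{Aut}(\Gamma)$ has a subgroup $G$ isomorphic to $S_N$ with $G_N=\{\mathrm{id}_\Gamma\}$, then $\Gamma$ is $n$-transitively standard symmetric; that is, $\operatorname{Aut}(\Gamma)$ is player $n$-transitive and $\operatorname{Aut}(\Gamma)$ has a subgroup that is player transitive and strategy trivial.
   Context: A game bijection $g=(\pi;(\tau_i)_{i\in N})$ of $\Gamma$ consists of $\pi\in S_N$ (its player permutation) and bijections $\tau_i:A_i\to A_{\pi(i)}$; write $g(i)=\pi(i)$, $g(s_i)=\tau_i(s_i)$, $g(s)=(\tau_{\pi^{-1}(j)}(s_{\pi^{-1}(j)}))_{j\in N}$; composition is $(\eta;(\phi_j))\circ(\pi;(\tau_i))=(\eta\circ\pi;(\phi_{\pi(i)}\circ\tau_i)_{i\in N})$, identity $\mathrm{id}_\Gamma=(\mathrm{id}_N;(\mathrm{id}_{A_i}))$. $g$ is an automorphism if $u_i(s)=u_{g(i)}(g(s))$ for all $i\in N$, $s\in A$; $\operatorname{Aut}(\Gamma)$ is the group of automorphisms. For a subgroup $G$, $G_N=\{g\in G: g(i)=i\ \forall i\in N\}$. A subgroup is player transitive if its player permutations act transitively on $N$, player $n$-transitive if its set of player permutations is all of $S_N$, and strategy trivial if for each $i\in N$, $g(s_i)=s_i$ for all $g$ in it with $g(i)=i$ and all $s_i\in A_i$. *)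

theory Defs
  imports Complex_Main "HOL-Algebra.Bij" "HOL-Combinatorics.Permutations"
begin

definition finite_game :: "'p set \<Rightarrow> ('p \<Rightarrow> 's set) \<Rightarrow> ('p \<Rightarrow> ('p \<Rightarrow> 's) \<Rightarrow> real) \<Rightarrow> bool" where
  "finite_game N A u \<longleftrightarrow> finite N \<and> N \<noteq> {} \<and> (\<forall>i\<in>N. finite (A i) \<and> A i \<noteq> {})"

type_synonym ('p, 's) gbij = "('p \<Rightarrow> 'p) \<times> ('p \<Rightarrow> 's \<Rightarrow> 's)"

text \<open>Game bijections, represented canonically: the player permutation permutes N
 (identity outside N), and the strategy maps are extensional.\<close>

definition game_bijections :: "'p set \<Rightarrow> ('p \<Rightarrow> 's set) \<Rightarrow> ('p, 's) gbij set" where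
  "game_bijections N A = {(\<pi>, \<tau>). \<pi> permutes N \<and> \<tau> \<in> extensional N \<and>
      (\<forall>i\<in>N. \<tau> i \<in> extensional (A i) \<and> bij_betw (\<tau> i) (A i) (A (\<pi> i)))}"

definition gb_comp :: "'p set \<Rightarrow> ('p \<Rightarrow> 's set) \<Rightarrow> ('p, 's) gbij \<Rightarrow> ('p, 's) gbij \<Rightarrow> ('p, 's) gbij" where
  "gb_comp N A h g = (fst h \<circ> fst g,
      \<lambda>i\<in>N. \<lambda>x\<in>A i. snd h (fst g i) (snd g i x))"

definition gb_id :: "'p set \<Rightarrow> ('p \<Rightarrow> 's set) \<Rightarrow> ('p, 's) gbij" where
  "gb_id N A = (id, \<lambda>i\<in>N. \<lambda>x\<in>A i. x)"

definition gb_profile :: "'p set \<Rightarrow> ('p, 's) gbij \<Rightarrow> ('p \<Rightarrow> 's) \<Rightarrow> ('p \<Rightarrow> 's)" where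
  "gb_profile N g s = (\<lambda>j\<in>N. snd g (inv_into N (fst g) j) (s (inv_into N (fst g) j)))"

definition game_automorphisms ::
  "'p set \<Rightarrow> ('p \<Rightarrow> 's set) \<Rightarrow> ('p \<Rightarrow> ('p \<Rightarrow> 's) \<Rightarrow> real) \<Rightarrow> ('p, 's) gbij set" where
  "game_automorphisms N A u = {g \<in> game_bijections N A.
      \<forall>i\<in>N. \<forall>s\<in>PiE N A. u i s = u (fst g i) (gb_profile N g s)}"

definition Aut_group ::
  "'p set \<Rightarrow> ('p \<Rightarrow> 's set) \<Rightarrow> ('p \<Rightarrow> ('p \<Rightarrow> 's) \<Rightarrow> real) \<Rightarrow> ('p, 's) gbij monoid" where
  "Aut_group N A u = \<lparr>carrier = game_automorphisms N A u, monoid.mult = gb_comp N A, one = gb_id N A\<rparr>"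

definition player_stabilizer :: "'p set \<Rightarrow> ('p, 's) gbij set \<Rightarrow> ('p, 's) gbij set" where
  "player_stabilizer N G = {g \<in> G. \<forall>i\<in>N. fst g i = i}"

definition player_transitive :: "'p set \<Rightarrow> ('p, 's) gbij set \<Rightarrow> bool" where
  "player_transitive N G \<longleftrightarrow> (\<forall>i\<in>N. \<forall>j\<in>N. \<exists>g\<in>G. fst g i = j)"

definition player_n_transitive :: "'p set \<Rightarrow> ('p, 's) gbij set \<Rightarrow> bool" where
  "player_n_transitive N G \<longleftrightarrow> fst ` G = {\<pi>. \<pi> permutes N}"

definition strategy_trivial :: "'p set \<Rightarrow> ('p \<Rightarrow> 's set) \<Rightarrow> ('p, 's) gbij set \<Rightarrow> bool" where
  "strategy_trivial N A G \<longleftrightarrow>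
     (\<forall>i\<in>N. \<forall>g\<in>G. fst g i = i \<longrightarrow> (\<forall>x\<in>A i. snd g i x = x))"

definition n_transitively_standard_symmetric ::
  "'p set \<Rightarrow> ('p \<Rightarrow> 's set) \<Rightarrow> ('p \<Rightarrow> ('p \<Rightarrow> 's) \<Rightarrow> real) \<Rightarrow> bool" where
  "n_transitively_standard_symmetric N A u \<longleftrightarrow>
     player_n_transitive N (game_automorphisms N A u) \<and>
     (\<exists>H. subgroup H (Aut_group N A u) \<and> player_transitive N H \<and> strategy_trivial N A H)"

end

theory Submission
  imports Defs
begin

lemma gb_assoc:
  assumes "z \<in> game_bijections N A"
  shows "gb_comp N A (gb_comp N A x y) z = gb_comp N A x (gb_comp N A y z)"
proof -
  have z1: "\<forall>i\<in>N. fst z i \<in> N" and z2: "\<forall>i\<in>N. \<forall>a\<in>A i. snd z i a \<in> A (fst z i)"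
    using assms by (auto simp: game_bijections_def permutes_in_image bij_betw_apply)
  show ?thesis unfolding gb_comp_def
    by (rule prod_eqI) (auto intro!: ext simp: z1 z2 restrict_def)
qed

lemma gb_lunit:
  assumes "g \<in> game_bijections N A"
  shows "gb_comp N A (gb_id N A) g = g"
proof -
  obtain p t where g: "g = (p,t)" by (cases g)
  have z1: "\<forall>i\<in>N. p i \<in> N" and z2: "\<forall>i\<in>N. \<forall>a\<in>A i. t i a \<in> A (p i)"
    and e1: "t \<in> extensional N" and e2: "\<forall>i\<in>N. t i \<in> extensional (A i)"
    using assms g by (auto simp: game_bijections_def permutes_in_image bij_betw_apply)
  have "(\<lambda>i\<in>N. \<lambda>a\<in>A i. t i a) = t"
    using e1 e2 by (auto intro!: ext simp: restrict_def extensional_def)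
  moreover have "(\<lambda>i\<in>N. \<lambda>a\<in>A i. (\<lambda>i\<in>N. \<lambda>x\<in>A i. x) (p i) (t i a)) = (\<lambda>i\<in>N. \<lambda>a\<in>A i. t i a)"
    by (intro restrict_ext) (simp add: z1 z2)
  ultimately show ?thesis unfolding gb_comp_def gb_id_def g by simp
qed

lemma gb_runit:
  assumes "g \<in> game_bijections N A"
  shows "gb_comp N A g (gb_id N A) = g"
proof -
  obtain p t where g: "g = (p,t)" by (cases g)
  have e1: "t \<in> extensional N" and e2: "\<forall>i\<in>N. t i \<in> extensional (A i)"
    using assms g by (auto simp: game_bijections_def)
  have "(\<lambda>i\<in>N. \<lambda>a\<in>A i. t i a) = t"
    using e1 e2 by (auto intro!: ext simp: restrict_def extensional_def)
  moreover have "(\<lambda>i\<in>N. \<lambda>a\<in>A i. t (id i) ((\<lambda>i\<in>N. \<lambda>x\<in>A i. x) i a)) = (\<lambda>i\<in>N. \<lambda>a\<in>A i. t i a)"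
    by (intro restrict_ext) simp
  ultimately show ?thesis unfolding gb_comp_def gb_id_def g by simp
qed

lemma card_Bij_perm:
  assumes "finite N"
  shows "card (Bij N) = card {p. p permutes N}"
proof -
  have "bij_betw (\<lambda>p. restrict p N) {p. p permutes N} (Bij N)"
  proof (rule bij_betwI')
    fix p q assume "p \<in> {p. p permutes N}" "q \<in> {p. p permutes N}"
    then show "(restrict p N = restrict q N) = (p = q)"
      by (auto simp: restrict_def fun_eq_iff permutes_def) metis+
  next
    fix p assume "p \<in> {p. p permutes N}"
    then have "bij_betw p N N" by (simp add: permutes_imp_bij)
    then have "bij_betw (restrict p N) N N" by (rule bij_betw_cong[THEN iffD1, rotated]) auto
    then show "restrict p N \<in> Bij N" by (simp add: Bij_def)
  next
    fix f assume f: "f \<in> Bij N"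
    define p where "p = (\<lambda>x. if x \<in> N then f x else x)"
    have "bij_betw f N N" using f by (simp add: Bij_def)
    then have "bij_betw p N N" by (rule bij_betw_cong[THEN iffD1, rotated]) (auto simp: p_def)
    then have "p permutes N" by (rule bij_imp_permutes) (simp add: p_def)
    moreover have "f = restrict p N" using f by (auto simp: Bij_def p_def restrict_def extensional_def)
    ultimately show "\<exists>p\<in>{p. p permutes N}. f = restrict p N" by blast
  qed
  then show ?thesis by (simp add: bij_betw_same_card)
qed

lemma funpow_permutes: "p permutes S \<Longrightarrow> (p ^^ k) permutes S"
  by (induct k) (auto simp: permutes_id permutes_compose)

lemma exists_cycle:
  assumes "finite N" "N \<noteq> {}"
  shows "\<exists>p. p permutes N \<and> (\<forall>i\<in>N. \<forall>j\<in>N. \<exists>k. (p^^k) i = j)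
     \<and> (\<forall>k. \<forall>i\<in>N. (p^^k) i = i \<longrightarrow> (\<forall>j\<in>N. (p^^k) j = j)) \<and> (\<exists>n>0. p^^n = id)"
proof -
  define n where "n = card N"
  have n0: "n > 0" using assms by (simp add: n_def card_gt_0_iff)
  obtain f where f: "bij_betw f {0..<n} N" using ex_bij_betw_nat_finite[OF assms(1)] n_def by blast
  define p where "p = (\<lambda>x. if x \<in> N then f (Suc (inv_into {0..<n} f x) mod n) else x)"
  have pf: "p (f m) = f (Suc m mod n)" if "m < n" for m
  proof -
    have "f m \<in> N" using f that by (auto dest: bij_betw_apply)
    moreover have "inv_into {0..<n} f (f m) = m" using f that by (simp add: bij_betw_inv_into_left)
    ultimately show ?thesis by (simp add: p_def)
  qed
  have pk: "(p^^k) (f m) = f ((m + k) mod n)" if "m < n" for m k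
  proof (induct k)
    case 0 then show ?case using that by simp
  next
    case (Suc k)
    have "(p^^Suc k) (f m) = p (f ((m + k) mod n))" using Suc by simp
    also have "\<dots> = f (Suc ((m + k) mod n) mod n)" using n0 by (simp add: pf)
    also have "\<dots> = f ((m + Suc k) mod n)" by (simp add: mod_Suc_eq)
    finally show ?case .
  qed
  have surjf: "\<And>x. x \<in> N \<Longrightarrow> \<exists>m<n. x = f m" using f
    by (metis atLeastLessThan_iff bij_betw_iff_bijections)
  have injf: "\<And>x y. f x = f y \<Longrightarrow> x < n \<Longrightarrow> y < n \<Longrightarrow> x = y"
    using bij_betw_imp_inj_on[OF f] by (auto dest: inj_onD)
  have bij: "bij_betw p N N"
  proof -
    have "inj_on p N"
    proof (rule inj_onI)
      fix x y assume x: "x \<in> N" and y: "y \<in> N" and e: "p x = p y"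
      obtain a b where a: "a < n" "x = f a" and b: "b < n" "y = f b" using surjf x y by blast
      have "f (Suc a mod n) = f (Suc b mod n)" using e a b pf by simp
      then have "Suc a mod n = Suc b mod n" using injf n0 by simp
      then have "a = b" using a b
        by (auto simp: mod_Suc split: if_splits)
      then show "x = y" using a b by simp
    qed
    moreover have "p ` N = N"
    proof
      show "p ` N \<subseteq> N" using f n0 by (auto simp: p_def intro: bij_betw_apply)
      show "N \<subseteq> p ` N"
      proof
        fix x assume "x \<in> N"
        then obtain a where a: "a < n" "x = f a" using surjf by blast
        have "x = (p^^n) (f a)" using pk[OF a(1), of n] a by simp
        also have "\<dots> = p ((p^^(n-1)) (f a))" using n0 by (cases n) auto
        also have "\<dots> = p (f ((a + (n - 1)) mod n))" using pk[OF a(1), of "n - 1"] by simp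
        finally have "x = p (f ((a + (n - 1)) mod n))" .
        moreover have "f ((a + (n - 1)) mod n) \<in> N" using f n0 by (auto intro: bij_betw_apply)
        ultimately show "x \<in> p ` N" by blast
      qed
    qed
    ultimately show ?thesis by (simp add: bij_betw_def)
  qed
  have perm: "p permutes N" by (rule bij_imp_permutes[OF bij]) (simp add: p_def)
  have T: "\<forall>i\<in>N. \<forall>j\<in>N. \<exists>k. (p^^k) i = j"
  proof (intro ballI)
    fix i j assume "i \<in> N" "j \<in> N"
    then obtain a b where a: "a < n" "i = f a" and b: "b < n" "j = f b" using surjf by blast
    have "a + (b + n - a) = b + n" using a by simp
    then have "(a + (b + n - a)) mod n = b" using b by simp
    then show "\<exists>k. (p^^k) i = j" using pk[OF a(1), of "b + n - a"] a b by metis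
  qed
  have F: "\<forall>k. \<forall>i\<in>N. (p^^k) i = i \<longrightarrow> (\<forall>j\<in>N. (p^^k) j = j)"
  proof (intro allI ballI impI)
    fix k i j assume i: "i \<in> N" and fi: "(p^^k) i = i" and j: "j \<in> N"
    obtain a where a: "a < n" "i = f a" using surjf i by blast
    obtain b where b: "b < n" "j = f b" using surjf j by blast
    have "f ((a + k) mod n) = f a" using fi pk[OF a(1)] a by simp
    then have e: "(a + k) mod n = a" using injf a n0 by simp
    have "k mod n = 0"
    proof (rule ccontr)
      define r where "r = k mod n"
      assume "k mod n \<noteq> 0"
      then have r: "0 < r" "r < n" using n0 by (auto simp: r_def)
      have e2: "(a + r) mod n = a" using e by (simp add: r_def mod_add_right_eq)
      show False
      proof (cases "a + r < n")
        case True then show False using e2 r by simp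
      next
        case False
        then have "(a + r) mod n = (a + r - n) mod n" by (simp add: le_mod_geq)
        also have "\<dots> = a + r - n" using a r by simp
        finally show False using e2 r a by simp
      qed
    qed
    then have "(b + k) mod n = b" using b by (metis add.right_neutral mod_add_right_eq mod_less)
    then show "(p^^k) j = j" using pk[OF b(1)] b by simp
  qed
  have "\<exists>n>0. p^^n = id"
  proof -
    have "(p^^n) x = x" for x
    proof (cases "x \<in> N")
      case True
      then obtain a where a: "a < n" "x = f a" using surjf by blast
      then show ?thesis using pk[OF a(1), of n] by simp
    next
      case False
      then show ?thesis using funpow_permutes[OF perm, of n] by (simp add: permutes_not_in)
    qed
    then have "p^^n = id" by (simp add: fun_eq_iff)
    then show "\<exists>n>0. p^^n = id" using n0 by blast
  qed
  then show ?thesis using perm T F by blast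
qed

theorem proposition5p6:
  fixes N :: "'p set" and A :: "'p \<Rightarrow> 's set" and u :: "'p \<Rightarrow> ('p \<Rightarrow> 's) \<Rightarrow> real"
    and G :: "('p, 's) gbij set"
  assumes "finite_game N A u"
    and "subgroup G (Aut_group N A u)"
    and "(Aut_group N A u)\<lparr>carrier := G\<rparr> \<cong> BijGroup N"
    and "player_stabilizer N G = {gb_id N A}"
  shows "n_transitively_standard_symmetric N A u"
proof -
  define M where "M = Aut_group N A u"
  define G' where "G' = M\<lparr>carrier := G\<rparr>"
  have finN: "finite N" and neN: "N \<noteq> {}" using assms(1) by (auto simp: finite_game_def)
  have sub: "subgroup G M" using assms(2) by (simp add: M_def)
  have cM: "carrier M = game_automorphisms N A u" by (simp add: M_def Aut_group_def)
  have mM: "\<And>x y. x \<otimes>\<^bsub>M\<^esub> y = gb_comp N A x y" by (simp add: M_def Aut_group_def)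
  have oM: "\<one>\<^bsub>M\<^esub> = gb_id N A" by (simp add: M_def Aut_group_def)
  have cG: "carrier G' = G" by (simp add: G'_def)
  have mG: "\<And>x y. x \<otimes>\<^bsub>G'\<^esub> y = gb_comp N A x y" by (simp add: G'_def M_def Aut_group_def)
  have oG: "\<one>\<^bsub>G'\<^esub> = gb_id N A" by (simp add: G'_def M_def Aut_group_def)
  have GA: "G \<subseteq> game_automorphisms N A u" using subgroup.subset[OF sub] cM by simp
  have AB: "game_automorphisms N A u \<subseteq> game_bijections N A" by (auto simp: game_automorphisms_def)
  have GB: "G \<subseteq> game_bijections N A" using GA AB by blast
  have Gm: "\<And>x y. x \<in> G \<Longrightarrow> y \<in> G \<Longrightarrow> gb_comp N A x y \<in> G"
    using subgroup.m_closed[OF sub] mM by metis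
  have G1: "gb_id N A \<in> G" using subgroup.one_closed[OF sub] oM by metis
  have mon: "monoid G'"
    by (rule monoidI) (use Gm G1 GB in \<open>auto simp: cG mG oG gb_assoc gb_lunit gb_runit\<close>)
  have grp: "group G'"
  proof -
    interpret B: group "BijGroup N" by (rule group_BijGroup)
    obtain \<phi> where phi: "\<phi> \<in> iso G' (BijGroup N)" using assms(3) by (auto simp: G'_def M_def is_iso_def)
    have hom: "\<And>x y. x \<in> G \<Longrightarrow> y \<in> G \<Longrightarrow> \<phi> (gb_comp N A x y) = \<phi> x \<otimes>\<^bsub>BijGroup N\<^esub> \<phi> y"
      and bij: "bij_betw \<phi> G (Bij N)"
      using phi by (auto simp: iso_def hom_def cG mG BijGroup_def)
    have phiC: "\<And>x. x \<in> G \<Longrightarrow> \<phi> x \<in> carrier (BijGroup N)"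
      using bij by (auto simp: BijGroup_def bij_betw_def)
    have e: "\<phi> (gb_id N A) = \<one>\<^bsub>BijGroup N\<^esub>"
    proof -
      have "\<phi> (gb_id N A) \<otimes>\<^bsub>BijGroup N\<^esub> \<phi> (gb_id N A) = \<phi> (gb_id N A)"
        using hom[OF G1 G1] gb_lunit[of "gb_id N A"] G1 GB by auto
      then show ?thesis using B.l_cancel_one phiC[OF G1] by blast
    qed
    show ?thesis
    proof (rule monoid.group_l_invI[OF mon])
      fix x assume x: "x \<in> carrier G'"
      then have xG: "x \<in> G" by (simp add: cG)
      define b where "b = inv\<^bsub>BijGroup N\<^esub> (\<phi> x)"
      have "b \<in> Bij N" using phiC[OF xG] by (simp add: b_def BijGroup_def[symmetric])
        (metis B.inv_closed BijGroup_def partial_object.select_convs(1))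
      then obtain y where y: "y \<in> G" "\<phi> y = b" using bij unfolding bij_betw_def by (metis imageE)
      have "\<phi> (gb_comp N A y x) = \<phi> (gb_id N A)"
        using hom[OF y(1) xG] y(2) e phiC[OF xG] by (simp add: b_def)
      then have "gb_comp N A y x = gb_id N A"
        using bij Gm[OF y(1) xG] G1 by (auto simp: bij_betw_def dest: inj_onD)
      then show "\<exists>y\<in>carrier G'. y \<otimes>\<^bsub>G'\<^esub> x = \<one>\<^bsub>G'\<^esub>" using y by (auto simp: cG mG oG)
    qed
  qed
  interpret G': group G' by (rule grp)
  have inv_eq: "inv\<^bsub>M\<^esub> x = inv\<^bsub>G'\<^esub> x" if x: "x \<in> G" for x
  proof -
    have x': "inv\<^bsub>G'\<^esub> x \<in> G" using x G'.inv_closed cG by auto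
    have li: "gb_comp N A (inv\<^bsub>G'\<^esub> x) x = gb_id N A" and ri: "gb_comp N A x (inv\<^bsub>G'\<^esub> x) = gb_id N A"
      using G'.l_inv G'.r_inv x by (auto simp: cG mG oG)
    show ?thesis unfolding m_inv_def[of M]
    proof (rule the_equality)
      show "inv\<^bsub>G'\<^esub> x \<in> carrier M \<and> x \<otimes>\<^bsub>M\<^esub> inv\<^bsub>G'\<^esub> x = \<one>\<^bsub>M\<^esub> \<and> inv\<^bsub>G'\<^esub> x \<otimes>\<^bsub>M\<^esub> x = \<one>\<^bsub>M\<^esub>"
        using x' GA li ri by (auto simp: cM mM oM)
    next
      fix y assume "y \<in> carrier M \<and> x \<otimes>\<^bsub>M\<^esub> y = \<one>\<^bsub>M\<^esub> \<and> y \<otimes>\<^bsub>M\<^esub> x = \<one>\<^bsub>M\<^esub>"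
      then have y: "y \<in> game_bijections N A" "gb_comp N A x y = gb_id N A" "gb_comp N A y x = gb_id N A"
        using AB by (auto simp: cM mM oM)
      have "y = gb_comp N A y (gb_id N A)" using gb_runit[OF y(1)] by simp
      also have "\<dots> = gb_comp N A y (gb_comp N A x (inv\<^bsub>G'\<^esub> x))" using ri by simp
      also have "\<dots> = gb_comp N A (gb_comp N A y x) (inv\<^bsub>G'\<^esub> x)" using gb_assoc[of "inv\<^bsub>G'\<^esub> x" N A y x] x' GB by auto
      also have "\<dots> = inv\<^bsub>G'\<^esub> x" using y(3) gb_lunit[of "inv\<^bsub>G'\<^esub> x" N A] x' GB by auto
      finally show "y = inv\<^bsub>G'\<^esub> x" .
    qed
  qed
  have fst_comp: "\<And>x y. fst (gb_comp N A x y) = fst x \<circ> fst y" by (simp add: gb_comp_def)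
  have fst_id: "fst (gb_id N A) = id" by (simp add: gb_id_def)
  have stab: "\<And>k. k \<in> G \<Longrightarrow> (\<forall>i\<in>N. fst k i = i) \<Longrightarrow> k = gb_id N A"
    using assms(4) by (auto simp: player_stabilizer_def)
  have injG: "inj_on fst G"
  proof (rule inj_onI)
    fix g h assume g: "g \<in> G" and h: "h \<in> G" and e: "fst g = fst h"
    define h' where "h' = inv\<^bsub>G'\<^esub> h"
    have h': "h' \<in> G" using h G'.inv_closed cG by (auto simp: h'_def)
    have "gb_comp N A h' h = gb_id N A" using G'.l_inv[of h] h by (auto simp: h'_def cG mG oG)
    then have "fst h' \<circ> fst h = id" by (metis fst_comp fst_id)
    then have "fst (gb_comp N A h' g) = id" using e fst_comp by simp
    then have k: "gb_comp N A h' g = gb_id N A" using stab Gm[OF h' g] by simp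
    have "g = (h \<otimes>\<^bsub>G'\<^esub> h') \<otimes>\<^bsub>G'\<^esub> g" using G'.r_inv[of h] h g by (simp add: cG h'_def)
    also have "\<dots> = h \<otimes>\<^bsub>G'\<^esub> (h' \<otimes>\<^bsub>G'\<^esub> g)" using G'.m_assoc h h' g by (simp add: cG)
    also have "\<dots> = h" using k h by (simp add: mG[symmetric] oG[symmetric] cG)
    finally show "g = h" .
  qed
  have imgG: "fst ` G = {\<pi>. \<pi> permutes N}"
  proof (rule card_subset_eq)
    show "finite {\<pi>. \<pi> permutes N}" using finN by (rule finite_permutations)
    show "fst ` G \<subseteq> {\<pi>. \<pi> permutes N}" using GB by (auto simp: game_bijections_def)
    have "card (fst ` G) = card G" using injG by (rule card_image)
    also have "\<dots> = card (Bij N)" using iso_same_card[OF assms(3)] by (simp add: BijGroup_def)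
    also have "\<dots> = card {\<pi>. \<pi> permutes N}" using finN by (rule card_Bij_perm)
    finally show "card (fst ` G) = card {\<pi>. \<pi> permutes N}" .
  qed
  have ntrans: "player_n_transitive N (game_automorphisms N A u)"
    unfolding player_n_transitive_def
  proof
    show "fst ` game_automorphisms N A u \<subseteq> {\<pi>. \<pi> permutes N}" using AB by (auto simp: game_bijections_def)
    show "{\<pi>. \<pi> permutes N} \<subseteq> fst ` game_automorphisms N A u" using imgG GA by blast
  qed
  obtain p where p: "p permutes N" and ptr: "\<forall>i\<in>N. \<forall>j\<in>N. \<exists>k. (p^^k) i = j"
    and pfix: "\<forall>k. \<forall>i\<in>N. (p^^k) i = i \<longrightarrow> (\<forall>j\<in>N. (p^^k) j = j)"
    and pord: "\<exists>n>0. p^^n = id"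
    using exists_cycle[OF finN neN] by blast
  obtain n0 where n0: "n0 > 0" "p^^n0 = id" using pord by blast
  define H where "H = {h\<in>G. \<exists>k. fst h = p^^k}"
  have subH: "subgroup H M"
  proof
    show "H \<subseteq> carrier M" using GA cM by (auto simp: H_def)
  next
    fix x y assume "x \<in> H" "y \<in> H"
    then obtain a b where "x \<in> G" "y \<in> G" "fst x = p^^a" "fst y = p^^b" by (auto simp: H_def)
    then show "x \<otimes>\<^bsub>M\<^esub> y \<in> H" using Gm by (auto simp: H_def mM fst_comp funpow_add[symmetric])
  next
    show "\<one>\<^bsub>M\<^esub> \<in> H" using G1 by (auto simp: H_def oM fst_id intro: exI[of _ 0])
  next
    fix x assume "x \<in> H"
    then obtain a where x: "x \<in> G" "fst x = p^^a" by (auto simp: H_def)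
    define x' where "x' = inv\<^bsub>G'\<^esub> x"
    have x': "x' \<in> G" using x G'.inv_closed cG by (auto simp: x'_def)
    have "gb_comp N A x' x = gb_id N A" using G'.l_inv[of x] x by (auto simp: x'_def cG mG oG)
    then have l: "fst x' \<circ> p^^a = id" using x(2) by (metis fst_comp fst_id)
    have "p^^(a * n0) = id" using n0 by (metis funpow_mult mult.commute id_funpow)
    moreover have "a * n0 = a + (a * n0 - a)" using n0 by simp
    ultimately have "p^^a \<circ> p^^(a * n0 - a) = id" by (metis funpow_add)
    then have "fst x' = p^^(a * n0 - a)" using l by (metis comp_assoc id_comp comp_id)
    then show "inv\<^bsub>M\<^esub> x \<in> H" using inv_eq[OF x(1)] x' by (auto simp: H_def x'_def)
  qed
  have trH: "player_transitive N H" unfolding player_transitive_def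
  proof (intro ballI)
    fix i j assume "i \<in> N" "j \<in> N"
    then obtain k where k: "(p^^k) i = j" using ptr by blast
    have "p^^k \<in> fst ` G" using imgG funpow_permutes[OF p] by auto
    then obtain h where "h \<in> G" "fst h = p^^k" by auto
    then have "h \<in> H" "fst h i = j" using k by (auto simp: H_def)
    then show "\<exists>g\<in>H. fst g i = j" by blast
  qed
  have stH: "strategy_trivial N A H" unfolding strategy_trivial_def
  proof (intro ballI impI)
    fix i g x assume i: "i \<in> N" and g: "g \<in> H" and fi: "fst g i = i" and x: "x \<in> A i"
    then obtain k where gk: "g \<in> G" "fst g = p^^k" by (auto simp: H_def)
    then have "\<forall>j\<in>N. fst g j = j" using pfix i fi by metis
    then have "g = gb_id N A" using stab gk(1) by blast
    then show "snd g i x = x" using i x by (simp add: gb_id_def)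
  qed
  show ?thesis unfolding n_transitively_standard_symmetric_def
    using ntrans subH trH stH by (auto simp: M_def)
qed

end
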